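(* Let $n$ be odd and suppose $q=18n^2+1$ is a prime power. Let $x$ be a primitive $(3n)$-th root of unity in $\mathbb F_q$, and let $Y=(y_0,y_1,\dots,y_{3n-1})$ be a complete system of representatives for the cosets of $C^{3n}$ in $\mathbb F_q^*$ such that $\sum_{i=0}^{3n-1}y_i=0$, $\sum_{i=0}^{3n-1}x^iy_i=0$ and $\sum_{i=0}^{3n-1}x^{-i}y_i=0$. Then there exists a $(9n^2,3n;4)$ Heffter net.
   Context: $C^{3n}$ denotes the subgroup of index $3n$ of $\mathbb F_q^*$ (the nonzero $3n$-th powers). A half-set of an abelian group $G$ of odd order $2v+1\ge7$ is a subset $V\subseteq G\setminus\{0\}$ containing exactly one element of each pair $\{g,-g\}$, $g\ne0$. A $(v,k)$ Heffter system on $V$ is a partition of $V$ into blocks of size $k$ each summing to $0$ in $G$. A $(k^2,k;r)$ Heffter net is a partial linear space (any two distinct points lie in at most one block) whose point set is a half-set $V$ of an abelian group of order $2k^2+1$, with a resolution of its blocks into $r$ parallel classes (each a partition of $V$), each of which is a $(k^2,k)$ Heffter system. *)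

theory Defs
  imports "HOL-Algebra.Algebra"
begin

text \<open>Abelian groups are HOL-Algebra commutative groups; the group operation
  \<otimes> plays the role of +, \<one> of 0, inv of negation, finprod of the sum.\<close>

definition half_set :: "('g, 'b) monoid_scheme \<Rightarrow> 'g set \<Rightarrow> bool" where
  "half_set G V \<longleftrightarrow> V \<subseteq> carrier G - {\<one>\<^bsub>G\<^esub>} \<and>
     (\<forall>g \<in> carrier G - {\<one>\<^bsub>G\<^esub>}. (g \<in> V \<longleftrightarrow> inv\<^bsub>G\<^esub> g \<notin> V))"

definition heffter_system :: "('g, 'b) monoid_scheme \<Rightarrow> nat \<Rightarrow> 'g set \<Rightarrow> 'g set set \<Rightarrow> bool" where
  "heffter_system G k V P \<longleftrightarrow>
     (\<forall>B \<in> P. B \<subseteq> V \<and> card B = k \<and> finprod G (\<lambda>x. x) B = \<one>\<^bsub>G\<^esub>) \<and>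
     \<Union>P = V \<and>
     (\<forall>B \<in> P. \<forall>B' \<in> P. B \<noteq> B' \<longrightarrow> B \<inter> B' = {})"

definition heffter_net :: "('g, 'b) monoid_scheme \<Rightarrow> nat \<Rightarrow> nat \<Rightarrow> 'g set \<Rightarrow> (nat \<Rightarrow> 'g set set) \<Rightarrow> bool" where
  "heffter_net G k r V Pc \<longleftrightarrow>
     comm_group G \<and> finite (carrier G) \<and> order G = 2 * k^2 + 1 \<and>
     half_set G V \<and>
     (\<forall>i < r. heffter_system G k V (Pc i)) \<and>
     (\<forall>i < r. \<forall>j < r. i \<noteq> j \<longrightarrow> Pc i \<inter> Pc j = {}) \<and>
     (\<forall>B \<in> (\<Union>i<r. Pc i). \<forall>B' \<in> (\<Union>i<r. Pc i). B \<noteq> B' \<longrightarrow> card (B \<inter> B') \<le> 1)"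

definition nz_powers :: "nat \<Rightarrow> 'a::field set" where
  "nz_powers m = {z ^ m | z. z \<noteq> 0}"

definition mult_cosets :: "'a::field set \<Rightarrow> 'a set set" where
  "mult_cosets C = {(\<lambda>c. a * c) ` C | a. a \<noteq> 0}"

end

theory Submission imports Defs "HOL-Computational_Algebra.Polynomial" begin

lemma roots_card:
  fixes m :: nat
  assumes "m \<ge> 1"
  shows "card {z::'a::{field,finite}. z^m = 1} \<le> m"
proof -
  let ?p = "Polynomial.monom (1::'a) m + [:-1:]"
  have d: "Polynomial.degree ?p = m" using assms
    by (subst Polynomial.degree_add_eq_left) (auto simp: Polynomial.degree_monom_eq)
  have "?p \<noteq> 0" using assms d by auto
  then have "card {z. poly ?p z = 0} \<le> m" using card_poly_roots_bound[of ?p] d by simp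
  moreover have "{z. poly ?p z = 0} = {z. z^m = 1}" by (auto simp: poly_monom)
  ultimately show ?thesis by simp
qed

lemma fermat_field:
  fixes z :: "'a::{field,finite}"
  assumes "z \<noteq> 0"
  shows "z ^ (card (UNIV::'a set) - 1) = 1"
proof -
  let ?A = "UNIV - {0::'a}"
  have inj: "inj_on (\<lambda>u. z*u) ?A" using assms by (auto simp: inj_on_def)
  have im: "(\<lambda>u. z*u) ` ?A = ?A"
  proof
    show "(\<lambda>u. z*u) ` ?A \<subseteq> ?A" using assms by auto
    show "?A \<subseteq> (\<lambda>u. z*u) ` ?A"
    proof
      fix u assume u: "u \<in> ?A"
      have "u = z * (inverse z * u)" using assms by simp
      moreover have "inverse z * u \<in> ?A" using assms u by simp
      ultimately show "u \<in> (\<lambda>u. z*u) ` ?A" by blast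
    qed
  qed
  have bij: "bij_betw (\<lambda>u. z*u) ?A ?A" using inj im by (simp add: bij_betw_def)
  have "prod id ?A = prod (\<lambda>u. z*u) ?A"
    using prod.reindex_bij_betw[OF bij, of id] by simp
  also have "\<dots> = z ^ card ?A * prod id ?A" by (simp add: prod.distrib)
  finally have "z ^ card ?A = 1"
    by (simp add: prod_zero_iff)
  moreover have "card ?A = card (UNIV::'a set) - 1" by (simp add: card_Diff_singleton)
  ultimately show ?thesis by simp
qed

definition AG :: "'a::field monoid" where
  "AG = \<lparr>carrier = UNIV, monoid.mult = (+), monoid.one = 0\<rparr>"

lemma AG_comm_group: "comm_group AG"
  by (rule comm_groupI) (auto simp: AG_def add.assoc add.commute intro: exI[of _ "- _"])

lemma AG_inv: "inv\<^bsub>AG\<^esub> g = - (g::'a::field)"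
  by (rule group.inv_equality[OF comm_group.axioms(2)[OF AG_comm_group]]) (auto simp: AG_def)

lemma AG_finprod:
  fixes B :: "'a::field set"
  assumes "finite B"
  shows "finprod AG (\<lambda>x. x) B = sum (\<lambda>x. x) B"
  using assms
proof (induction B rule: finite_induct)
  case empty
  then show ?case using comm_monoid.finprod_empty[OF comm_group.axioms(1)[OF AG_comm_group]]
    by (simp add: AG_def)
next
  case (insert a F)
  then show ?case
    using comm_monoid.finprod_insert[OF comm_group.axioms(1)[OF AG_comm_group], of F a "\<lambda>x. x"]
    by (simp add: AG_def)
qed



locale hs =
  fixes m :: nat and x :: "'a::{field,finite}" and y :: "nat \<Rightarrow> 'a"
  assumes m_odd: "odd m" and m3: "m \<ge> 3"
    and cardU: "card (UNIV :: 'a set) = 2*m*m + 1"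
    and xm: "x ^ m = 1" and prim: "\<forall>j. 0 < j \<and> j < m \<longrightarrow> x ^ j \<noteq> 1"
    and ynz: "\<forall>i < m. y i \<noteq> 0"
    and cos: "\<forall>g. g \<noteq> 0 \<longrightarrow> (\<exists>i<m. (\<lambda>c. y i * c) ` nz_powers m = (\<lambda>c. g * c) ` nz_powers m)"
    and s0: "(\<Sum>i<m. y i) = 0"
    and s1: "(\<Sum>i<m. x ^ i * y i) = 0"
    and s2: "(\<Sum>i<m. inverse x ^ i * y i) = 0"
begin

lemma x_nz: "x \<noteq> 0" using xm m3 by (metis power_0_left not_one_le_zero zero_neq_one le_zero_eq numeral_le_iff  gr0_conv_Suc le_0_eq not_numeral_le_zero)

lemma xmod: "x ^ k = x ^ (k mod m)"
proof -
  have "x ^ k = x ^ (m * (k div m) + k mod m)" by simp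
  also have "\<dots> = (x^m)^(k div m) * x^(k mod m)" by (simp only: power_add power_mult)
  finally show ?thesis using xm by simp
qed

lemma xpow_inj: "inj_on (\<lambda>j. x^j) {..<m}"
proof (rule inj_onI)
  fix j j' assume j: "j \<in> {..<m}" and j': "j' \<in> {..<m}" and e: "x^j = x^j'"
  show "j = j'"
  proof (rule ccontr)
    assume ne: "j \<noteq> j'"
    have key: "x ^ (b - a) = 1" if "a < b" "b < m" "x^a = x^b" for a b
    proof -
      have "x^b = x^a * x^(b-a)" using that by (metis le_add_diff_inverse less_imp_le power_add)
      then show ?thesis using that x_nz by simp
    qed
    show False
    proof (cases "j < j'")
      case True then show ?thesis using key[of j j'] j' e prim by auto
    next
      case False then have "j' < j" using ne by simp
      then show ?thesis using key[of j' j] j e prim by auto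
    qed
  qed
qed

lemma roots_eq: "{z::'a. z^m = 1} = (\<lambda>j. x^j) ` {..<m}"
proof (rule card_subset_eq[symmetric])
  show "finite {z::'a. z^m = 1}" by (rule finite_subset[OF subset_UNIV finite_UNIV])
  show sub: "(\<lambda>j. x^j) ` {..<m} \<subseteq> {z::'a. z^m = 1}"
  proof
    fix z assume "z \<in> (\<lambda>j. x^j) ` {..<m}"
    then obtain j where "z = x^j" by blast
    then have "z^m = (x^m)^j" by (simp flip: power_mult add: mult.commute)
    then show "z \<in> {z. z^m = 1}" using xm by simp
  qed
  have "card ((\<lambda>j. x^j) ` {..<m}) = m" using xpow_inj by (simp add: card_image)
  moreover have "card {z::'a. z^m = 1} \<le> m" using roots_card[where 'a='a, of m] m3 by simp
  ultimately show "card ((\<lambda>j. x^j) ` {..<m}) = card {z::'a. z^m = 1}"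
    using card_mono[OF _ sub] by simp
qed

lemma fermat: "(z::'a) \<noteq> 0 \<Longrightarrow> z ^ (2*m*m) = 1"
  using fermat_field[of z] cardU by simp

lemma surjP:
  assumes g: "g \<noteq> 0"
  shows "\<exists>s j i. s \<in> {1,-1} \<and> j < m \<and> i < m \<and> g = s * x^j * y i"
proof -
  obtain i where i: "i < m" and ci: "(\<lambda>c. y i * c) ` nz_powers m = (\<lambda>c. g * c) ` nz_powers m"
    using cos g by blast
  have "(1::'a) \<in> nz_powers m" unfolding nz_powers_def by (auto intro: exI[of _ 1])
  then have "g \<in> (\<lambda>c. y i * c) ` nz_powers m" using ci by (metis image_eqI mult_1_right)
  then obtain c where c: "c \<in> nz_powers m" and gc: "g = y i * c" by blast
  from c obtain z where z: "z \<noteq> 0" "c = z^m" unfolding nz_powers_def by blast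
  have "c^m * c^m = z^(m*m + m*m)" using z(2) by (simp flip: power_mult power_add)
  also have "m*m + m*m = 2*m*m" by simp
  finally have "c^m * c^m = 1" using fermat[OF z(1)] by simp
  then have "(c^m - 1) * (c^m + 1) = 0" by (simp add: algebra_simps)
  then have "c^m = 1 \<or> c^m = -1" by (auto simp: eq_neg_iff_add_eq_0)
  then show ?thesis
  proof
    assume "c^m = 1"
    then obtain j where "j < m" "c = x^j" using roots_eq by blast
    then show ?thesis using i gc by (intro exI[of _ 1] exI[of _ j] exI[of _ i]) (auto simp: mult.commute)
  next
    assume h: "c^m = -1"
    have "(-c)^m = 1" using h m_odd by (simp add: power_minus_odd)
    then obtain j where j: "j < m" "-c = x^j" using roots_eq by blast
    then have "g = (-1) * x^j * y i" using gc by (simp add: minus_equation_iff[of c])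
    then show ?thesis using i j by blast
  qed
qed

definition "DD = ({1,-1} :: 'a set) \<times> {..<m} \<times> {..<m}"
definition "ff = (\<lambda>(s,j,i). s * x^j * y i)"

lemma ff_image: "ff ` DD = UNIV - {0}"
proof
  show "ff ` DD \<subseteq> UNIV - {0}" using x_nz ynz by (auto simp: ff_def DD_def)
  show "UNIV - {0} \<subseteq> ff ` DD"
  proof
    fix g assume "g \<in> (UNIV::'a set) - {0}"
    then obtain s j i where "s \<in> {1,-1}" "j < m" "i < m" "g = s * x^j * y i" using surjP by blast
    then show "g \<in> ff ` DD" unfolding ff_def DD_def by (auto intro!: image_eqI[of _ _ "(s,j,i)"])
  qed
qed

lemma one_neq: "(1::'a) \<noteq> -1" and ff_inj: "inj_on ff DD"
proof -
  have c1: "card (UNIV - {0::'a}) = 2*m*m" using cardU by (simp add: card_Diff_singleton)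
  have le: "card (ff ` DD) \<le> card DD" by (rule card_image_le) (simp add: DD_def)
  have cD: "card DD = card ({1,-1}::'a set) * (m * m)" by (simp add: DD_def card_cartesian_product)
  show ne: "(1::'a) \<noteq> -1"
  proof
    assume h: "(1::'a) = -1"
    then have e: "({1,-1}::'a set) = {1}" by simp
    have "card DD = m*m" using cD unfolding e by simp
    then show False using le ff_image c1 m3 by simp
  qed
  have "card DD = 2*m*m" using cD ne by simp
  then show "inj_on ff DD"
    using ff_image c1 by (intro eq_card_imp_inj_on) (auto simp: DD_def)
qed

lemma INJ:
  assumes "s \<in> {1,-1}" "s' \<in> {1,-1}" "j < m" "j' < m" "i < m" "i' < m"
    and "s * x^j * y i = s' * x^j' * y i'"
  shows "s = s' \<and> j = j' \<and> i = i'"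
  using inj_onD[OF ff_inj, of "(s,j,i)" "(s',j',i')"] assms by (auto simp: ff_def DD_def)

lemma PINJ:
  assumes "i < m" "i' < m" "x^k * y i = x^k' * y i'"
  shows "i = i' \<and> k mod m = k' mod m"
proof -
  have "1 * x^(k mod m) * y i = 1 * x^(k' mod m) * y i'" using assms(3) xmod[of k] xmod[of k'] by simp
  then show ?thesis using INJ[of 1 1 "k mod m" "k' mod m" i i'] assms m3 by auto
qed

lemma PNEG:
  assumes "i < m" "i' < m"
  shows "x^k * y i \<noteq> - (x^k' * y i')"
proof
  assume "x^k * y i = - (x^k' * y i')"
  then have "1 * x^(k mod m) * y i = (-1) * x^(k' mod m) * y i'" using xmod[of k] xmod[of k'] by simp
  then show False using INJ[of 1 "-1" "k mod m" "k' mod m" i i'] assms m3 one_neq by auto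
qed

end


lemma modeq_int: "(a::nat) mod m = b mod m \<Longrightarrow> int m dvd int a - int b"
  by (metis mod_eq_dvd_iff of_nat_mod)

lemma small_dvd_zero:
  fixes M t :: int
  assumes "M dvd t" "\<bar>t\<bar> < M"
  shows "t = 0"
  using dvd_imp_le_int[of t M] assms by fastforce

lemma arith_key:
  fixes M t d :: int
  assumes "odd M" "M dvd d * t" "d \<in> {1,-1,2,-2, M-1, 1-M, M-2, 2-M}" "\<bar>t\<bar> < M"
  shows "t = 0"
proof -
  have "M dvd 2 * t"
  proof -
    consider "d = 1" | "d = -1" | "d = 2" | "d = -2" | "d = M - 1" | "d = 1 - M" | "d = M - 2" | "d = 2 - M"
      using assms(3) by blast
    then show ?thesis
    proof cases
      case 5
      have "M dvd M * t - d * t" using assms(2) by (simp add: dvd_diff)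
      then show ?thesis using 5 by (simp add: algebra_simps)
    next
      case 6
      have "M dvd M * t + d * t" using assms(2) by (simp add: dvd_add)
      then show ?thesis using 6 by (simp add: algebra_simps)
    next
      case 7
      have "M dvd M * t - d * t" using assms(2) by (simp add: dvd_diff)
      then show ?thesis using 7 by (simp add: algebra_simps)
    next
      case 8
      have "M dvd M * t + d * t" using assms(2) by (simp add: dvd_add)
      then show ?thesis using 8 by (simp add: algebra_simps)
    qed (use assms(2) in auto)
  qed
  moreover have "coprime 2 M" using assms(1) by simp
  ultimately have "M dvd t" using coprime_dvd_mult_right_iff by (metis coprime_commute)
  then show ?thesis using small_dvd_zero assms(4) by blast
qed

context hs begin

definition "L a c = (\<lambda>i. x^(c + a*i) * y i) ` {..<m}"
definition "Vt i = (\<lambda>j. x^j * y i) ` {..<m}"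
definition "VV = (\<lambda>(j,i). x^j * y i) ` ({..<m} \<times> {..<m})"
definition "sl k = (if k = (0::nat) then 0 else if k = 1 then 1 else m - 1)"
definition "Pc k = (if k < 3 then L (sl k) ` {..<m} else Vt ` {..<m})"

lemma sl_in: "sl k \<in> {0, 1, m - 1}" by (simp add: sl_def)

lemma sl_inj: "k < 3 \<Longrightarrow> k' < 3 \<Longrightarrow> k \<noteq> k' \<Longrightarrow> sl k \<noteq> sl k'"
  using m3 by (auto simp: sl_def)

lemma L_sub: "L a c \<subseteq> VV"
proof
  fix p assume "p \<in> L a c"
  then obtain i where i: "i < m" "p = x^(c + a*i) * y i" by (auto simp: L_def)
  then have "p = (\<lambda>(j,i). x^j * y i) ((c + a*i) mod m, i)" using xmod by simp
  moreover have "((c + a*i) mod m, i) \<in> {..<m} \<times> {..<m}" using i m3 by simp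
  ultimately show "p \<in> VV" unfolding VV_def by blast
qed

lemma Vt_sub: "i < m \<Longrightarrow> Vt i \<subseteq> VV"
  by (auto simp: Vt_def VV_def)

lemma L_inj: "inj_on (\<lambda>i. x^(c + a*i) * y i) {..<m}"
proof (rule inj_onI)
  fix i i' assume "i \<in> {..<m}" "i' \<in> {..<m}" "x^(c + a*i) * y i = x^(c + a*i') * y i'"
  then show "i = i'" using PINJ[of i i' "c + a*i" "c + a*i'"] by blast
qed

lemma Vt_inj: "i < m \<Longrightarrow> inj_on (\<lambda>j. x^j * y i) {..<m}"
proof (rule inj_onI)
  fix j j' assume "i < m" "j \<in> {..<m}" "j' \<in> {..<m}" "x^j * y i = x^j' * y i"
  then show "j = j'" using PINJ[of i i j j'] by simp
qed

lemma L_card: "card (L a c) = m"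
  unfolding L_def using L_inj by (simp add: card_image)

lemma Vt_card: "i < m \<Longrightarrow> card (Vt i) = m"
  unfolding Vt_def using Vt_inj by (simp add: card_image)

lemma x_inv: "x^(m-1) = inverse x"
proof -
  have sm: "Suc (m-1) = m" using m3 by simp
  have "x * x^(m-1) = x^(Suc (m-1))" by (simp only: power_Suc)
  then have "x * x^(m-1) = x^m" by (simp only: sm)
  then have "x * x^(m-1) = 1" using xm by simp
  then show ?thesis by (metis inverse_unique)
qed

lemma L_sum:
  assumes "a \<in> {0, 1, m - 1}"
  shows "sum (\<lambda>p. p) (L a c) = 0"
proof -
  have e1: "sum (\<lambda>p. p) (L a c) = (\<Sum>i<m. x^(c + a*i) * y i)"
    unfolding L_def by (simp add: sum.reindex[OF L_inj])
  have e2: "(\<Sum>i<m. x^(c + a*i) * y i) = (x ^ c) * (\<Sum>i<m. (x ^ a) ^ i * y i)"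
    by (simp add: sum_distrib_left power_add power_mult mult.assoc)
  have e3: "(\<Sum>i<m. (x^a)^i * y i) = 0"
    using assms s0 s1 s2 x_inv by auto
  show ?thesis by (simp add: e1 e2 e3)
qed

lemma Vt_sum: "i < m \<Longrightarrow> sum (\<lambda>p. p) (Vt i) = 0"
proof -
  assume i: "i < m"
  have x1: "x \<noteq> 1" using spec[OF prim, of 1] m3 by simp
  have "sum (\<lambda>p. p) (Vt i) = (\<Sum>j<m. x^j * y i)"
    unfolding Vt_def by (simp add: sum.reindex[OF Vt_inj[OF i]])
  also have "\<dots> = (\<Sum>j<m. x^j) * y i" by (simp add: sum_distrib_right)
  also have "(\<Sum>j<m. x^j) = 0" using x1 xm by (simp add: sum_gp_strict)
  finally show ?thesis by simp
qed

lemma mod_fix: "j < m \<Longrightarrow> ((j + (m - t mod m)) mod m + t) mod m = j"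
proof -
  assume j: "j < m"
  have tm: "t mod m < m" using m3 by simp
  have "((j + (m - t mod m)) mod m + t) mod m = (j + (m - t mod m) + t) mod m"
    by (simp add: mod_add_left_eq)
  also have "j + (m - t mod m) + t = j + m * (Suc (t div m))"
  proof -
    have t: "t = m * (t div m) + t mod m" by simp
    have "m * Suc (t div m) = m + m * (t div m)" by simp
    then show ?thesis using tm t by linarith
  qed
  also have "(j + m * (Suc (t div m))) mod m = j" by (simp only: mod_mult_self2) (simp add: j)
  finally show ?thesis .
qed

lemma VV_in_L:
  assumes "j < m" "i < m"
  shows "x^j * y i \<in> L a ((j + (m - (a*i) mod m)) mod m)"
proof -
  let ?c = "(j + (m - (a*i) mod m)) mod m"
  have "x^(?c + a*i) = x^j" using xmod[of "?c + a*i"] mod_fix[OF assms(1), of "a*i"] by simp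
  then show ?thesis unfolding L_def using assms by (auto intro!: image_eqI[of _ _ i])
qed

lemma L_disj:
  assumes "c < m" "c' < m" "c \<noteq> c'"
  shows "L a c \<inter> L a c' = {}"
proof (rule ccontr)
  assume "L a c \<inter> L a c' \<noteq> {}"
  then obtain i i' where i: "i < m" "i' < m" and e: "x^(c + a*i) * y i = x^(c' + a*i') * y i'"
    unfolding L_def by auto
  from PINJ[OF i e] have "i = i'" "(c + a*i) mod m = (c' + a*i) mod m" by auto
  then have "int m dvd int (c + a*i) - int (c' + a*i)" using modeq_int by blast
  then have "int m dvd int c - int c'" by simp
  then have "int c - int c' = 0" using small_dvd_zero assms by fastforce
  then show False using assms by simp
qed

lemma Vt_disj: "i < m \<Longrightarrow> i' < m \<Longrightarrow> i \<noteq> i' \<Longrightarrow> Vt i \<inter> Vt i' = {}"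
  unfolding Vt_def using PINJ by blast

lemma meetLL:
  assumes "a \<in> {0, 1, m - 1}" "b \<in> {0, 1, m - 1}" "a \<noteq> b"
  shows "card (L a c \<inter> L b c') \<le> 1"
proof -
  have "p1 = p2" if p1: "p1 \<in> L a c \<inter> L b c'" and p2: "p2 \<in> L a c \<inter> L b c'" for p1 p2
  proof -
    have key: "\<exists>i<m. p = x^(c + a*i) * y i \<and> int m dvd (int c + int a * int i) - (int c' + int b * int i)"
      if "p \<in> L a c \<inter> L b c'" for p
    proof -
      from that obtain i i' where i: "i < m" "i' < m" and pa: "p = x^(c + a*i) * y i"
        and pb: "p = x^(c' + b*i') * y i'" unfolding L_def by auto
      have "x^(c + a*i) * y i = x^(c' + b*i') * y i'" using pa pb by simp
      from PINJ[OF i this] have "i = i'" "(c + a*i) mod m = (c' + b*i) mod m" by auto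
      then have "int m dvd int (c + a*i) - int (c' + b*i)" using modeq_int by blast
      then show ?thesis using i pa by auto
    qed
    obtain i1 where i1: "i1 < m" "p1 = x^(c + a*i1) * y i1"
      "int m dvd (int c + int a * int i1) - (int c' + int b * int i1)" using key[OF p1] by blast
    obtain i2 where i2: "i2 < m" "p2 = x^(c + a*i2) * y i2"
      "int m dvd (int c + int a * int i2) - (int c' + int b * int i2)" using key[OF p2] by blast
    have "int m dvd ((int c + int a * int i1) - (int c' + int b * int i1))
                    - ((int c + int a * int i2) - (int c' + int b * int i2))"
      using i1(3) i2(3) by (rule dvd_diff)
    then have dv: "int m dvd (int a - int b) * (int i1 - int i2)" by (simp add: algebra_simps)
    have "int a - int b \<in> {1,-1,2,-2, int m-1, 1-int m, int m-2, 2-int m}"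
      using assms m3 by auto
    moreover have "odd (int m)" using m_odd by simp
    moreover have "\<bar>int i1 - int i2\<bar> < int m" using i1 i2 by auto
    ultimately have "int i1 - int i2 = 0" using arith_key dv by blast
    then show ?thesis using i1 i2 by simp
  qed
  then have "\<forall>p\<in>L a c \<inter> L b c'. \<forall>q\<in>L a c \<inter> L b c'. p = q" by blast
  then show ?thesis using card_le_Suc0_iff_eq[of "L a c \<inter> L b c'"] by simp
qed

lemma meetLV:
  assumes "i0 < m"
  shows "card (L a c \<inter> Vt i0) \<le> 1"
proof -
  have "p = x^(c + a*i0) * y i0" if "p \<in> L a c \<inter> Vt i0" for p
  proof -
    from that obtain i j where i: "i < m" "j < m" and pa: "p = x^(c + a*i) * y i"
      and pb: "p = x^j * y i0" unfolding L_def Vt_def by auto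
    have "x^(c + a*i) * y i = x^j * y i0" using pa pb by simp
    from PINJ[OF i(1) assms this] have "i = i0" by auto
    then show ?thesis using pa by simp
  qed
  then have "\<forall>p\<in>L a c \<inter> Vt i0. \<forall>q\<in>L a c \<inter> Vt i0. p = q" by blast
  then show ?thesis using card_le_Suc0_iff_eq[of "L a c \<inter> Vt i0"] by simp
qed

lemma L_neq_L: "a \<in> {0, 1, m - 1} \<Longrightarrow> b \<in> {0, 1, m - 1} \<Longrightarrow> a \<noteq> b \<Longrightarrow> L a c \<noteq> L b c'"
  using meetLL[of a b c c'] L_card[of a c] m3 by auto

lemma L_neq_Vt: "i < m \<Longrightarrow> L a c \<noteq> Vt i"
  using meetLV[of i a c] L_card[of a c] m3 by auto


lemma VV_iff: "p \<in> VV \<longleftrightarrow> (\<exists>j<m. \<exists>i<m. p = x^j * y i)"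
  unfolding VV_def by auto

lemma half: "half_set (AG::'a monoid) VV"
  unfolding half_set_def
proof (intro conjI ballI)
  show "VV \<subseteq> carrier (AG::'a monoid) - {\<one>\<^bsub>AG\<^esub>}"
    using x_nz ynz by (auto simp: VV_def AG_def)
  fix g assume g: "g \<in> carrier (AG::'a monoid) - {\<one>\<^bsub>AG\<^esub>}"
  then have g0: "g \<noteq> 0" by (simp add: AG_def)
  obtain s j i where sji: "s \<in> {1,-1}" "j < m" "i < m" "g = s * x^j * y i" using surjP[OF g0] by blast
  have "g \<in> VV \<longleftrightarrow> - g \<notin> VV"
  proof (cases "s = 1")
    case True
    then have "g \<in> VV" using sji VV_iff by auto
    moreover have "- g \<notin> VV"
    proof
      assume "- g \<in> VV"
      then obtain j' i' where "j' < m" "i' < m" "- g = x^j' * y i'" using VV_iff by auto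
      then have "x^j' * y i' = - (x^j * y i)" using True sji by simp
      then show False using PNEG \<open>i < m\<close> \<open>i' < m\<close> by blast
    qed
    ultimately show ?thesis by simp
  next
    case False
    then have s: "s = -1" using sji by simp
    then have "- g \<in> VV" using sji VV_iff by auto
    moreover have "g \<notin> VV"
    proof
      assume "g \<in> VV"
      then obtain j' i' where "j' < m" "i' < m" "g = x^j' * y i'" using VV_iff by auto
      then have "x^j' * y i' = - (x^j * y i)" using s sji by simp
      then show False using PNEG \<open>i < m\<close> \<open>i' < m\<close> by blast
    qed
    ultimately show ?thesis by simp
  qed
  then show "g \<in> VV \<longleftrightarrow> inv\<^bsub>AG\<^esub> g \<notin> VV" by (simp add: AG_inv)
qed

lemma sys: "heffter_system (AG::'a monoid) m VV (Pc k)"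
  unfolding heffter_system_def
proof (intro conjI ballI impI)
  fix B assume B: "B \<in> Pc k"
  show "B \<subseteq> VV"
  proof (cases "k < 3")
    case True then show ?thesis using B L_sub by (auto simp: Pc_def)
  next
    case False
    then obtain i where "i < m" "B = Vt i" using B by (auto simp: Pc_def)
    then show ?thesis using Vt_sub by blast
  qed
  show "card B = m" using B L_card Vt_card by (auto simp: Pc_def split: if_splits)
  have "sum (\<lambda>p. p) B = 0" using B L_sum[OF sl_in] Vt_sum by (auto simp: Pc_def split: if_splits)
  moreover have "finprod (AG::'a monoid) (\<lambda>x. x) B = sum (\<lambda>p. p) B" by (rule AG_finprod) simp
  moreover have "\<one>\<^bsub>(AG::'a monoid)\<^esub> = 0" by (simp add: AG_def)
  ultimately show "finprod AG (\<lambda>x. x) B = \<one>\<^bsub>AG\<^esub>" by simp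
next
  show "\<Union> (Pc k) = VV"
  proof
    show "\<Union> (Pc k) \<subseteq> VV" using L_sub by (auto simp: Pc_def intro: Vt_sub[THEN subsetD])
    show "VV \<subseteq> \<Union> (Pc k)"
    proof
      fix p assume "p \<in> VV"
      then obtain j i where ji: "j < m" "i < m" "p = x^j * y i" using VV_iff by auto
      show "p \<in> \<Union> (Pc k)"
      proof (cases "k < 3")
        case True
        let ?c = "(j + (m - (sl k * i) mod m)) mod m"
        have "?c < m" using m3 by simp
        then show ?thesis using VV_in_L[OF ji(1,2), of "sl k"] ji True by (auto simp: Pc_def)
      next
        case False
        then show ?thesis using ji by (auto simp: Pc_def Vt_def)
      qed
    qed
  qed
next
  fix B B' assume B: "B \<in> Pc k" and B': "B' \<in> Pc k" and ne: "B \<noteq> B'"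
  show "B \<inter> B' = {}"
  proof (cases "k < 3")
    case True
    then obtain c c' where "c < m" "c' < m" "B = L (sl k) c" "B' = L (sl k) c'"
      using B B' by (auto simp: Pc_def)
    then show ?thesis using L_disj ne by blast
  next
    case False
    then obtain i i' where "i < m" "i' < m" "B = Vt i" "B' = Vt i'"
      using B B' by (auto simp: Pc_def)
    then show ?thesis using Vt_disj ne by blast
  qed
qed

lemma pdisj:
  assumes "k < 4" "k' < 4" "k \<noteq> k'"
  shows "Pc k \<inter> Pc k' = {}"
proof (rule ccontr)
  assume "Pc k \<inter> Pc k' \<noteq> {}"
  then obtain B where B: "B \<in> Pc k" "B \<in> Pc k'" by blast
  show False
  proof (cases "k < 3")
    case True
    then obtain c where c: "B = L (sl k) c" using B by (auto simp: Pc_def)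
    show False
    proof (cases "k' < 3")
      case True
      then obtain c' where "B = L (sl k') c'" using B by (auto simp: Pc_def)
      then show False using c L_neq_L[OF sl_in sl_in sl_inj[OF \<open>k < 3\<close> True assms(3)]] by metis
    next
      case False
      then obtain i where "i < m" "B = Vt i" using B by (auto simp: Pc_def)
      then show False using c L_neq_Vt by metis
    qed
  next
    case False
    then have "k' < 3" using assms by auto
    then obtain c where c: "B = L (sl k') c" using B by (auto simp: Pc_def)
    obtain i where "i < m" "B = Vt i" using B False by (auto simp: Pc_def)
    then show False using c L_neq_Vt by metis
  qed
qed

lemma linear:
  assumes B: "B \<in> Pc k" and B': "B' \<in> Pc k'" and ne: "B \<noteq> B'"
  shows "card (B \<inter> B') \<le> 1"
proof (cases "k < 3 \<and> k' < 3 \<and> k \<noteq> k'")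
  case True
  then obtain c c' where "B = L (sl k) c" "B' = L (sl k') c'" using B B' by (auto simp: Pc_def)
  then show ?thesis using meetLL[OF sl_in sl_in sl_inj] True by metis
next
  case F1: False
  show ?thesis
  proof (cases "k < 3 \<and> \<not> k' < 3")
    case True
    then obtain c i where "i < m" "B = L (sl k) c" "B' = Vt i" using B B' by (auto simp: Pc_def)
    then show ?thesis using meetLV by metis
  next
    case F2: False
    show ?thesis
    proof (cases "\<not> k < 3 \<and> k' < 3")
      case True
      then obtain c i where "i < m" "B' = L (sl k') c" "B = Vt i" using B B' by (auto simp: Pc_def)
      then show ?thesis using meetLV by (metis Int_commute)
    next
      case False
      then have "Pc k = Pc k'" using F1 F2 by (auto simp: Pc_def)
      then have "B \<inter> B' = {}" using sys[of k] B B' ne unfolding heffter_system_def by blast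
      then show ?thesis by simp
    qed
  qed
qed

lemma net: "heffter_net (AG::'a monoid) m 4 VV Pc"
  unfolding heffter_net_def Coset.order_def
proof (intro conjI allI impI ballI)
  show "comm_group AG" by (rule AG_comm_group)
  show "finite (carrier (AG::'a monoid))" by (simp add: AG_def)
  show "card (carrier (AG::'a monoid)) = 2 * m^2 + 1" using cardU by (simp add: AG_def power2_eq_square)
  show "half_set AG VV" by (rule half)
  show "\<And>i. i < 4 \<Longrightarrow> heffter_system AG m VV (Pc i)" by (rule sys)
  show "\<And>i j. i < 4 \<Longrightarrow> j < 4 \<Longrightarrow> i \<noteq> j \<Longrightarrow> Pc i \<inter> Pc j = {}" by (rule pdisj)
  fix B B' assume "B \<in> (\<Union>i<4. Pc i)" "B' \<in> (\<Union>i<4. Pc i)" "B \<noteq> B'"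
  then show "card (B \<inter> B') \<le> 1" using linear by blast
qed

end

theorem theorem5p1:
  fixes n :: nat and x :: "'a::{field,finite}" and y :: "nat \<Rightarrow> 'a"
  assumes "odd n"
    and "card (UNIV :: 'a set) = 18 * n^2 + 1"
    and "x ^ (3*n) = 1" and "\<forall>j. 0 < j \<and> j < 3*n \<longrightarrow> x ^ j \<noteq> 1"
    and "\<forall>i < 3*n. y i \<noteq> 0"
    and "bij_betw (\<lambda>i. (\<lambda>c. y i * c) ` nz_powers (3*n)) {..<3*n} (mult_cosets (nz_powers (3*n)))"
    and "(\<Sum>i<3*n. y i) = 0"
    and "(\<Sum>i<3*n. x ^ i * y i) = 0"
    and "(\<Sum>i<3*n. inverse x ^ i * y i) = 0"
  shows "\<exists>(G :: 'a monoid) V Pc. heffter_net G (3*n) 4 V Pc"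
proof -
  have cos: "\<forall>g. g \<noteq> 0 \<longrightarrow> (\<exists>i<3*n. (\<lambda>c. y i * c) ` nz_powers (3*n) = (\<lambda>c. g * c) ` nz_powers (3*n))"
  proof (intro allI impI)
    fix g :: 'a assume "g \<noteq> 0"
    then have "(\<lambda>c. g * c) ` nz_powers (3*n) \<in> mult_cosets (nz_powers (3*n))"
      unfolding mult_cosets_def by blast
    then have "(\<lambda>c. g * c) ` nz_powers (3*n) \<in> (\<lambda>i. (\<lambda>c. y i * c) ` nz_powers (3*n)) ` {..<3*n}"
      using assms(6) unfolding bij_betw_def by simp
    then obtain i where "i \<in> {..<3*n}" "(\<lambda>c. g * c) ` nz_powers (3*n) = (\<lambda>c. y i * c) ` nz_powers (3*n)"
      by blast
    then show "\<exists>i<3*n. (\<lambda>c. y i * c) ` nz_powers (3*n) = (\<lambda>c. g * c) ` nz_powers (3*n)"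
      by auto
  qed
  have n1: "n \<ge> 1" using assms(1) by (cases n) auto
  interpret hs "3*n" x y
  proof
    show "odd (3*n)" using assms(1) by simp
    show "3 \<le> 3*n" using n1 by simp
    show "card (UNIV :: 'a set) = 2 * (3*n) * (3*n) + 1" using assms(2) by (simp add: power2_eq_square)
    show "x ^ (3*n) = 1" by (rule assms(3))
    show "\<forall>j. 0 < j \<and> j < 3*n \<longrightarrow> x ^ j \<noteq> 1" by (rule assms(4))
    show "\<forall>i < 3*n. y i \<noteq> 0" by (rule assms(5))
    show "\<forall>g. g \<noteq> 0 \<longrightarrow> (\<exists>i<3*n. (\<lambda>c. y i * c) ` nz_powers (3*n) = (\<lambda>c. g * c) ` nz_powers (3*n))" by (rule cos)
    show "(\<Sum>i<3*n. y i) = 0" by (rule assms(7))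
    show "(\<Sum>i<3*n. x ^ i * y i) = 0" by (rule assms(8))
    show "(\<Sum>i<3*n. inverse x ^ i * y i) = 0" by (rule assms(9))
  qed
  show ?thesis using net by blast
qed

end
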